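(* Let $p,q,s$ be complex numbers with $p\neq0$, $q\neq 0$, $s^2\neq -1$. Let $\tilde A$ be the unital complex algebra generated by $\xi,\eta,\zeta,U,V,Z$ subject to the relations $$\zeta\xi=q^2\xi\zeta,\quad \eta\zeta=q^2\zeta\eta,\quad \xi U=pU\xi,\quad V\xi=p\xi V,\quad \eta V=pV\eta,\quad U\eta=p\eta U,$$ $$UV=VU,\quad U\zeta=\zeta U,\quad V\zeta=\zeta V,$$ $$\xi\eta=(\zeta-1)(\zeta+s^2)+UV,\qquad \eta\xi=(q^2\zeta-1)(q^2\zeta+s^2)+UV,$$ with $Z$ central and $Z^2=UV$. Let $$\tilde e=\frac{1}{2(1+s^2)}\begin{pmatrix}1+s^2+2Z&0&1-s^2-2\zeta&2\xi\\ 0&1+s^2+2Z&-2\eta&s^2-1+2q^2\zeta\\ 1-s^2-2\zeta&2\xi&1+s^2-2Z&0\\ -2\eta&s^2-1+2q^2\zeta&0&1+s^2-2Z\end{pmatrix}\in\mathrm{Mat}_4(\tilde A),$$ and let $\tilde E$ be the projective module defined by $\tilde e$. Then $ch_k(\tilde E)=0$ for all $k=0,1,2,\ldots$.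
   Context: For a projector $e=(e_{ij})\in\mathrm{Mat}_N(A)$ over a unital algebra $A$, the components of its Chern–Connes character are $$ch_n(E)=c_n\sum_{i_1,\dots,i_{2n+1}}\big(e-\tfrac12\mathbf 1\big)_{i_1i_2}\otimes\bar e_{i_2i_3}\otimes\bar e_{i_3i_4}\otimes\cdots\otimes\bar e_{i_{2n+1}i_1}\in A\otimes (A/\mathbb C1)^{\otimes 2n},$$ where $\bar e_{ij}$ denotes the image of $e_{ij}$ in $A/\mathbb C1$ and $c_n$ are nonzero normalisation constants. *)

theory Defs
  imports Complex_Main "HOL-Library.Poly_Mapping"
begin

datatype gen = Xi | Eta | Zeta | GU | GV | GZ

datatype word = W "gen list"

instantiation word :: monoid_add
begin
definition zero_word_def: "0 = W []"
fun plus_word :: "word \<Rightarrow> word \<Rightarrow> word" where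
  "plus_word (W a) (W b) = W (a @ b)"
instance
proof
  fix a b c :: word
  show "a + b + c = a + (b + c)" by (cases a; cases b; cases c) simp
  show "0 + a = a" by (cases a) (simp add: zero_word_def)
  show "a + 0 = a" by (cases a) (simp add: zero_word_def)
qed
end

text \<open>The free unital complex algebra: finitely supported functions on words,
  with convolution product (monoid algebra of the free monoid).\<close>
type_synonym falg = "word \<Rightarrow>\<^sub>0 complex"

definition smult :: "complex \<Rightarrow> ('a \<Rightarrow>\<^sub>0 complex) \<Rightarrow> ('a \<Rightarrow>\<^sub>0 complex)" where
  "smult c x = Poly_Mapping.map ((*) c) x"

definition sc :: "complex \<Rightarrow> falg" where
  "sc c = Poly_Mapping.single 0 c"

definition mono :: "word \<Rightarrow> falg" where
  "mono w = Poly_Mapping.single w 1"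

definition g :: "gen \<Rightarrow> falg" where
  "g x = mono (W [x])"

inductive_set cspan :: "('a \<Rightarrow>\<^sub>0 complex) set \<Rightarrow> ('a \<Rightarrow>\<^sub>0 complex) set" for S where
  zero: "0 \<in> cspan S"
| base: "x \<in> S \<Longrightarrow> x \<in> cspan S"
| add: "x \<in> cspan S \<Longrightarrow> y \<in> cspan S \<Longrightarrow> x + y \<in> cspan S"
| scal: "x \<in> cspan S \<Longrightarrow> smult c x \<in> cspan S"

definition rels :: "complex \<Rightarrow> complex \<Rightarrow> complex \<Rightarrow> falg set" where
  "rels p q s = {
     g Zeta * g Xi - sc (q^2) * g Xi * g Zeta,
     g Eta * g Zeta - sc (q^2) * g Zeta * g Eta,
     g Xi * g GU - sc p * g GU * g Xi,
     g GV * g Xi - sc p * g Xi * g GV,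
     g Eta * g GV - sc p * g GV * g Eta,
     g GU * g Eta - sc p * g Eta * g GU,
     g GU * g GV - g GV * g GU,
     g GU * g Zeta - g Zeta * g GU,
     g GV * g Zeta - g Zeta * g GV,
     g Xi * g Eta - ((g Zeta - 1) * (g Zeta + sc (s^2)) + g GU * g GV),
     g Eta * g Xi - ((sc (q^2) * g Zeta - 1) * (sc (q^2) * g Zeta + sc (s^2)) + g GU * g GV),
     g GZ * g GZ - g GU * g GV }
   \<union> {g GZ * g x - g x * g GZ | x. True}"

text \<open>Two-sided ideal generated by the relations; \<open>\<tilde>A\<close> = free algebra / this ideal.\<close>
definition rel_ideal :: "complex \<Rightarrow> complex \<Rightarrow> complex \<Rightarrow> falg set" where
  "rel_ideal p q s = cspan {mono u * r * mono v | u v r. r \<in> rels p q s}"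

text \<open>The tensor power of the free algebra with m factors is modelled as finitely
  supported functions on lists of words of length m (basis: tuples of words).
  \<open>tens fs\<close> is the pure tensor \<open>fs!0 \<otimes> ... \<otimes> fs!(m-1)\<close>.\<close>
fun tens :: "falg list \<Rightarrow> (word list \<Rightarrow>\<^sub>0 complex)" where
  "tens [] = Poly_Mapping.single [] 1"
| "tens (f # fs) = (\<Sum>w\<in>Poly_Mapping.keys f. \<Sum>ws\<in>Poly_Mapping.keys (tens fs).
      Poly_Mapping.single (w # ws) (Poly_Mapping.lookup f w * Poly_Mapping.lookup (tens fs) ws))"

text \<open>Kernel of the canonical map from the (2n+1)-fold tensor power of the free algebra
  onto \<open>\<tilde>A \<otimes> (\<tilde>A/\<complex>1)^{\<otimes>2n}\<close>: spanned by pure tensors having some factor in the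
  relation ideal, or some factor in position \<open>\<ge> 1\<close> a scalar multiple of 1.\<close>
definition chern_kernel :: "complex \<Rightarrow> complex \<Rightarrow> complex \<Rightarrow> nat \<Rightarrow> (word list \<Rightarrow>\<^sub>0 complex) set" where
  "chern_kernel p q s n = cspan
     ({tens fs | fs. length fs = 2*n+1 \<and> (\<exists>i<length fs. fs!i \<in> rel_ideal p q s)}
    \<union> {tens fs | fs. length fs = 2*n+1 \<and> (\<exists>i c. 1 \<le> i \<and> i < length fs \<and> fs!i = sc c)})"

text \<open>For an N x N matrix e (indices 0..N-1) with entries (representatives) in the free
  algebra, the lift of
  \<open>c_n \<Sum> (e - 1/2)_{i1 i2} \<otimes> e_{i2 i3} \<otimes> ... \<otimes> e_{i(2n+1) i1}\<close>.\<close>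
definition chern :: "(nat \<Rightarrow> complex) \<Rightarrow> nat \<Rightarrow> (nat \<Rightarrow> nat \<Rightarrow> falg) \<Rightarrow> nat \<Rightarrow> (word list \<Rightarrow>\<^sub>0 complex)" where
  "chern c N e n = (let m = 2*n+1 in
     smult (c n) (\<Sum>is\<in>{is. length is = m \<and> set is \<subseteq> {..<N}}.
        tens (map (\<lambda>k. (if k = 0 then e (is!0) (is!(1 mod m)) - (if is!0 = is!(1 mod m) then sc (1/2) else 0)
                        else e (is!k) (is!((k+1) mod m)))) [0..<m])))"

definition etilde :: "complex \<Rightarrow> complex \<Rightarrow> nat \<Rightarrow> nat \<Rightarrow> falg" where
  "etilde q s i j = sc (1 / (2 * (1 + s^2))) *
    (if (i,j) = (0,0) then sc (1 + s^2) + sc 2 * g GZ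
     else if (i,j) = (0,2) then sc (1 - s^2) - sc 2 * g Zeta
     else if (i,j) = (0,3) then sc 2 * g Xi
     else if (i,j) = (1,1) then sc (1 + s^2) + sc 2 * g GZ
     else if (i,j) = (1,2) then - (sc 2 * g Eta)
     else if (i,j) = (1,3) then sc (s^2 - 1) + sc (2 * q^2) * g Zeta
     else if (i,j) = (2,0) then sc (1 - s^2) - sc 2 * g Zeta
     else if (i,j) = (2,1) then sc 2 * g Xi
     else if (i,j) = (2,2) then sc (1 + s^2) - sc 2 * g GZ
     else if (i,j) = (3,0) then - (sc 2 * g Eta)
     else if (i,j) = (3,1) then sc (s^2 - 1) + sc (2 * q^2) * g Zeta
     else if (i,j) = (3,3) then sc (1 + s^2) - sc 2 * g GZ
     else 0)"

end

theory Submission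
  imports Defs
begin
lemma lookup_smult[simp]: "Poly_Mapping.lookup (smult c x) w = c * Poly_Mapping.lookup x w"
  by (simp add: smult_def map.rep_eq when_def)
lemma lookup_sc: "Poly_Mapping.lookup (sc c) w = (if w = 0 then c else 0)"
  by (auto simp: sc_def lookup_single when_def)
lemma sc_mult_lookup[simp]: "Poly_Mapping.lookup (sc c * x) w = c * Poly_Mapping.lookup x w"
  unfolding sc_def mult_map_scale_conv_mult[symmetric] by (simp add: map.rep_eq when_def)
lemma sc0[simp]: "sc 0 = 0" by (simp add: sc_def)

lemma lookup_tens: "Poly_Mapping.lookup (tens fs) ws =
   (if length ws = length fs then (\<Prod>i<length fs. Poly_Mapping.lookup (fs!i) (ws!i)) else 0)"
proof (induction fs arbitrary: ws)
  case Nil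
  then show ?case by (cases ws) (auto simp: lookup_single when_def)
next
  case (Cons f fs)
  show ?case
  proof (cases ws)
    case Nil
    then show ?thesis by (simp add: lookup_sum lookup_single when_def)
  next
    case (Cons w0 ws0)
    have "Poly_Mapping.lookup (tens (f # fs)) ws =
      (\<Sum>w\<in>Poly_Mapping.keys f. \<Sum>vs\<in>Poly_Mapping.keys (tens fs).
         (if w = w0 \<and> vs = ws0 then Poly_Mapping.lookup f w * Poly_Mapping.lookup (tens fs) vs else 0))"
      by (simp add: lookup_sum lookup_single when_def Cons)
    also have "\<dots> = Poly_Mapping.lookup f w0 * Poly_Mapping.lookup (tens fs) ws0"
    proof -
      have i: "(\<Sum>vs\<in>Poly_Mapping.keys (tens fs).
         (if w = w0 \<and> vs = ws0 then Poly_Mapping.lookup f w * Poly_Mapping.lookup (tens fs) vs else 0))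
        = (if w = w0 then Poly_Mapping.lookup f w * Poly_Mapping.lookup (tens fs) ws0 else 0)" for w
        by (cases "w = w0"; cases "ws0 \<in> Poly_Mapping.keys (tens fs)") (auto simp: in_keys_iff)
      show ?thesis unfolding i
        by (cases "w0 \<in> Poly_Mapping.keys f") (auto simp: in_keys_iff)
    qed
    finally have eq: "Poly_Mapping.lookup (tens (f # fs)) ws = Poly_Mapping.lookup f w0 * Poly_Mapping.lookup (tens fs) ws0" .
    show ?thesis unfolding eq Cons.IH[of ws0] using Cons by (simp del: prod.lessThan_Suc add: prod.lessThan_Suc_shift)
  qed
qed

lemma tens_add: "i < length xs \<Longrightarrow> tens (xs[i := a + b]) = tens (xs[i := a]) + tens (xs[i := b])"
proof (rule poly_mapping_eqI)
  fix ws assume i: "i < length xs"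
  have sp: "(\<Prod>k<length xs. Poly_Mapping.lookup (xs[i := y] ! k) (ws ! k))
     = Poly_Mapping.lookup y (ws!i) * (\<Prod>k\<in>{..<length xs}-{i}. Poly_Mapping.lookup (xs ! k) (ws ! k))" for y
    using i by (subst prod.remove[of _ i]) (auto intro!: prod.cong)
  show "Poly_Mapping.lookup (tens (xs[i := a + b])) ws =
        Poly_Mapping.lookup (tens (xs[i := a]) + tens (xs[i := b])) ws"
    unfolding lookup_add lookup_tens length_list_update sp by (simp add: distrib_right)
qed

lemma cspan_sum: "finite A \<Longrightarrow> (\<forall>x\<in>A. f x \<in> cspan S) \<Longrightarrow> sum f A \<in> cspan S"
  by (induction A rule: finite_induct) (auto intro: cspan.intros)

lemma tel: "length fs = 2*n+1 \<Longrightarrow> length gs = 2*n+1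
  \<Longrightarrow> (\<forall>i<2*n+1. 1 \<le> i \<longrightarrow> (\<exists>d. fs!i = gs!i + sc d)) \<Longrightarrow> fs!0 = gs!0
  \<Longrightarrow> (\<forall>i. j < i \<longrightarrow> i < 2*n+1 \<longrightarrow> fs!i = gs!i)
  \<Longrightarrow> tens fs - tens gs \<in> chern_kernel p q s n"
proof (induction j arbitrary: fs)
  case 0
  have "fs = gs"
  proof (rule nth_equalityI)
    show "length fs = length gs" using 0 by simp
    fix i assume "i < length fs"
    then show "fs!i = gs!i" using 0 by (cases i) auto
  qed
  then show ?case by (simp add: chern_kernel_def cspan.zero)
next
  case (Suc j)
  show ?case
  proof (cases "Suc j < 2*n+1")
    case False
    have "\<forall>i. j < i \<longrightarrow> i < 2*n+1 \<longrightarrow> fs!i = gs!i"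
    proof (intro allI impI)
      fix i assume "j < i" "i < 2*n+1"
      then have "Suc j < i" using False by simp
      then show "fs!i = gs!i" using Suc.prems(5) \<open>i < 2*n+1\<close> by blast
    qed
    then show ?thesis using Suc.prems(1-4) by (rule Suc.IH[rotated 4])
  next
    case True
    obtain d where d: "fs!(Suc j) = gs!(Suc j) + sc d" using Suc.prems(3) True by auto
    define hs where "hs = fs[Suc j := gs!(Suc j)]"
    have "tens hs - tens gs \<in> chern_kernel p q s n"
    proof (rule Suc.IH)
      show "length hs = 2*n+1" using Suc.prems by (simp add: hs_def)
      show "length gs = 2*n+1" using Suc.prems by simp
      show "hs!0 = gs!0" using Suc.prems by (simp add: hs_def)
      show "\<forall>i<2*n+1. 1 \<le> i \<longrightarrow> (\<exists>d. hs!i = gs!i + sc d)"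
      proof (intro allI impI)
        fix i assume i: "i < 2*n+1" "1 \<le> i"
        show "\<exists>d. hs!i = gs!i + sc d"
        proof (cases "i = Suc j")
          case True
          then have "hs!i = gs!i + sc 0" using Suc.prems i by (simp add: hs_def)
          then show ?thesis by blast
        next
          case False
          then have "hs!i = fs!i" by (simp add: hs_def)
          then show ?thesis using Suc.prems(3) i by simp
        qed
      qed
      show "\<forall>i. j < i \<longrightarrow> i < 2*n+1 \<longrightarrow> hs!i = gs!i"
      proof (intro allI impI)
        fix i assume i: "j < i" "i < 2*n+1"
        show "hs!i = gs!i"
        proof (cases "i = Suc j")
          case True then show ?thesis using Suc.prems i by (simp add: hs_def)
        next
          case False
          then have "Suc j < i" using i by simp
          then show ?thesis using Suc.prems(5) i False by (simp add: hs_def)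
        qed
      qed
    qed
    moreover have "tens (fs[Suc j := sc d]) \<in> chern_kernel p q s n"
    proof -
      have l: "length (fs[Suc j := sc d]) = 2*n+1" "fs[Suc j := sc d] ! Suc j = sc d"
        "1 \<le> Suc j" "Suc j < length (fs[Suc j := sc d])"
        using True Suc.prems by simp_all
      then have "tens (fs[Suc j := sc d]) \<in> {tens fs |fs. length fs = 2 * n + 1 \<and>
          (\<exists>i c. 1 \<le> i \<and> i < length fs \<and> fs ! i = sc c)}" by blast
      then show ?thesis unfolding chern_kernel_def by (intro cspan.base UnI2)
    qed
    moreover have eqf: "tens fs = tens hs + tens (fs[Suc j := sc d])"
    proof -
      have "fs = fs[Suc j := gs!(Suc j) + sc d]" using d by (metis list_update_id)
      then show ?thesis unfolding hs_def using tens_add[of "Suc j" fs] True Suc.prems by metis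
    qed
    ultimately have "(tens hs - tens gs) + tens (fs[Suc j := sc d]) \<in> chern_kernel p q s n"
      unfolding chern_kernel_def by (intro cspan.add) simp_all
    moreover have "(tens hs - tens gs) + tens (fs[Suc j := sc d]) = tens fs - tens gs"
      using eqf by (simp add: algebra_simps)
    ultimately show ?thesis by simp
  qed
qed

definition ep :: "complex \<Rightarrow> complex \<Rightarrow> nat \<Rightarrow> nat \<Rightarrow> falg" where
  "ep q s i j = etilde q s i j - (if i = j then sc (1/2) else 0)"
definition tau :: "nat \<Rightarrow> nat" where "tau i = (i + 2) mod 4"
definition uu :: "nat \<Rightarrow> complex" where "uu i = (if i < 2 then 1 else -1)"
lemma four: "i < (4::nat) \<Longrightarrow> i \<in> {0,1,2,3}" by auto
lemma ep_off: assumes "i < 4" "j < 4" "i \<noteq> j" shows "ep q s (tau i) (tau j) = ep q s i j"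
  using four[OF assms(1)] four[OF assms(2)] assms(3)
  by (elim insertE emptyE) (simp_all add: ep_def etilde_def tau_def)
lemma ep_off0: assumes "i < 4" "j < 4" "i \<noteq> j" "i div 2 = j div 2" shows "ep q s i j = 0"
  using four[OF assms(1)] four[OF assms(2)] assms(3,4)
  by (elim insertE emptyE) (simp_all add: ep_def etilde_def)
lemma uu_tau: assumes "i < 4" shows "uu (tau i) = - uu i" "tau i < 4"
  using four[OF assms(1)] by (elim insertE emptyE; simp add: uu_def tau_def)+
lemma aux1: "t \<noteq> 0 \<Longrightarrow> Poly_Mapping.lookup (sc (1/(2*t)) * (sc t + sc 2 * X) - sc (1/2)) w = Poly_Mapping.lookup X w / t"
  by (cases "w = 0") (simp_all add: lookup_add lookup_minus lookup_sc field_simps)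
lemma aux2: "t \<noteq> 0 \<Longrightarrow> Poly_Mapping.lookup (sc (1/(2*t)) * (sc t - sc 2 * X) - sc (1/2)) w = - Poly_Mapping.lookup X w / t"
  by (cases "w = 0") (simp_all add: lookup_add lookup_minus lookup_sc field_simps)
lemma ep_diag: assumes "1 + s^2 \<noteq> 0" "i < 4"
  shows "Poly_Mapping.lookup (ep q s i i) w = uu i * (Poly_Mapping.lookup (g GZ) w / (1 + s^2))"
proof -
  have "ep q s 0 0 = sc (1/(2*(1+s^2))) * (sc (1+s^2) + sc 2 * g GZ) - sc (1/2)"
       "ep q s 1 1 = sc (1/(2*(1+s^2))) * (sc (1+s^2) + sc 2 * g GZ) - sc (1/2)"
       "ep q s 2 2 = sc (1/(2*(1+s^2))) * (sc (1+s^2) - sc 2 * g GZ) - sc (1/2)"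
       "ep q s 3 3 = sc (1/(2*(1+s^2))) * (sc (1+s^2) - sc 2 * g GZ) - sc (1/2)"
    by (simp_all add: ep_def etilde_def)
  then show ?thesis using four[OF assms(2)]
    by (elim insertE emptyE) (simp_all only: aux1[OF assms(1)] aux2[OF assms(1)] uu_def, simp_all)
qed
lemma tau_tau: "i < 4 \<Longrightarrow> tau (tau i) = i"
proof -
  assume "i < 4" then have "i \<in> {0,1,2,3}" by auto
  then show ?thesis by (auto simp: tau_def)
qed
lemma tau_lt: "tau i < 4" by (simp add: tau_def)

lemma ep_tau: assumes "i < 4" "j < 4" "1 + s^2 \<noteq> 0" shows
  "Poly_Mapping.lookup (ep q s (tau i) (tau j)) w = -(uu i * uu j) * Poly_Mapping.lookup (ep q s i j) w"
proof (cases "i = j")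
  case True
  then show ?thesis using assms uu_tau[OF assms(1)] by (simp add: ep_diag uu_def)
next
  case False
  show ?thesis
  proof (cases "i div 2 = j div 2")
    case True
    have "tau i \<noteq> tau j" using tau_tau assms False by metis
    moreover have "tau i div 2 = tau j div 2" using True assms(1,2) four[OF assms(1)] four[OF assms(2)]
      by (elim insertE emptyE) (simp_all add: tau_def)
    ultimately show ?thesis using False True assms ep_off0[of "tau i" "tau j" q s] ep_off0[of i j q s] tau_lt by simp
  next
    case F2: False
    then have "uu i * uu j = -1" using assms four[OF assms(1)] four[OF assms(2)]
      by (elim insertE emptyE) (simp_all add: uu_def)
    then show ?thesis using False assms by (simp add: ep_off)
  qed
qed

lemma shift_prod: "(\<Prod>k<m. h ((k+1) mod m)) = (\<Prod>k<(m::nat). (h k :: complex))"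
proof (cases m)
  case 0 then show ?thesis by simp
next
  case (Suc n')
  have "(\<Prod>k<Suc n'. h ((k+1) mod Suc n')) = (\<Prod>k<n'. h ((k+1) mod Suc n')) * h 0"
    by (simp del: prod.lessThan_Suc_shift add: prod.lessThan_Suc)
  also have "\<dots> = (\<Prod>k<n'. h (Suc k)) * h 0" by (auto intro!: prod.cong)
  also have "\<dots> = (\<Prod>k<Suc n'. h k)" by (simp del: prod.lessThan_Suc add: prod.lessThan_Suc_shift)
  finally show ?thesis using Suc by simp
qed

lemma prod_neg2: "(\<Prod>k<(m::nat). -(A k * B k)) = (-1::complex)^m * ((\<Prod>k<m. A k) * (\<Prod>k<m. B k))"
  by (induction m) (auto simp: algebra_simps)

lemma sign_prod: "odd (m::nat) \<Longrightarrow> set ix \<subseteq> {..<4} \<Longrightarrow> length ix = m \<Longrightarrow>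
  (\<Prod>k<m. -(uu (ix!k) * uu (ix!((k+1) mod m)))) = -1"
proof -
  assume m: "odd m"
  have "(\<Prod>k<m. -(uu (ix!k) * uu (ix!((k+1) mod m)))) =
        (\<Prod>k<m. (-1::complex)) * ((\<Prod>k<m. uu (ix!k)) * (\<Prod>k<m. uu (ix!((k+1) mod m))))"
    by (simp only: prod_neg2) simp
  also have "\<dots> = (-1)^m * (\<Prod>k<m. uu (ix!k) * uu (ix!k))"
    unfolding shift_prod[of "\<lambda>k. uu (ix!k)"] by (simp add: prod.distrib)
  also have "(\<Prod>k<m. uu (ix!k) * uu (ix!k)) = 1"
    by (rule prod.neutral) (simp add: uu_def)
  finally show ?thesis using m by simp
qed

theorem mainTheorem4:
  fixes p q s :: complex and c :: "nat \<Rightarrow> complex"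
  assumes "p \<noteq> 0" and "q \<noteq> 0" and "s^2 \<noteq> -1"
    and "\<forall>n. c n \<noteq> 0"
  shows "\<forall>k. chern c 4 (etilde q s) k \<in> chern_kernel p q s k"
proof
  fix n :: nat
  have s1: "1 + s^2 \<noteq> 0" using assms(3) by (metis add.commute add_eq_0_iff)
  define m :: nat where "m = 2*n+1"
  define I where "I = {ix :: nat list. length ix = m \<and> set ix \<subseteq> {..<4}}"
  have finI: "finite I" proof -
    have "I = {xs. set xs \<subseteq> {..<4} \<and> length xs = m}" unfolding I_def by auto
    then show ?thesis using finite_lists_length_eq[of "{..<4::nat}" m] by simp
  qed
  define F where "F ix = tens (map (\<lambda>k. (if k = 0 then etilde q s (ix!0) (ix!(1 mod m)) - (if ix!0 = ix!(1 mod m) then sc (1/2) else 0)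
                        else etilde q s (ix!k) (ix!((k+1) mod m)))) [0..<m])" for ix
  define G where "G ix = tens (map (\<lambda>k. ep q s (ix!k) (ix!((k+1) mod m))) [0..<m])" for ix
  have ch: "chern c 4 (etilde q s) n = smult (c n) (\<Sum>ix\<in>I. F ix)"
    unfolding chern_def F_def I_def m_def Let_def by simp
  have G0: "(\<Sum>ix\<in>I. G ix) = 0"
  proof (rule poly_mapping_eqI)
    fix ws
    define P where "P ix = (\<Prod>k<m. Poly_Mapping.lookup (ep q s (ix!k) (ix!((k+1) mod m))) (ws!k))" for ix
    have lk: "Poly_Mapping.lookup (\<Sum>ix\<in>I. G ix) ws = (if length ws = m then (\<Sum>ix\<in>I. P ix) else 0)"
      by (simp add: lookup_sum G_def lookup_tens P_def)
    have bij: "bij_betw (map tau) I I"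
      by (rule bij_betw_byWitness[where f' = "map tau"]) (auto simp: I_def tau_def subset_iff intro!: map_idI simp flip: tau_def simp: tau_tau tau_lt)
    have neg: "P (map tau ix) = - P ix" if "ix \<in> I" for ix
    proof -
      have mpos: "m > 0" "odd m" using m_def by auto
      have "P (map tau ix) = (\<Prod>k<m. -(uu (ix!k) * uu (ix!((k+1) mod m))) * Poly_Mapping.lookup (ep q s (ix!k) (ix!((k+1) mod m))) (ws!k))"
        unfolding P_def using that mpos
        by (intro prod.cong refl) (auto simp: I_def ep_tau[OF _ _ s1] subset_iff)
      also have "\<dots> = (\<Prod>k<m. -(uu (ix!k) * uu (ix!((k+1) mod m)))) * P ix"
        by (simp only: prod.distrib P_def)
      also have "\<dots> = - P ix" using sign_prod[of m "ix"] that mpos by (simp add: I_def)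
      finally show ?thesis .
    qed
    have "(\<Sum>ix\<in>I. P ix) = (\<Sum>ix\<in>I. P (map tau ix))"
      using sum.reindex_bij_betw[OF bij, of P] by simp
    also have "\<dots> = - (\<Sum>ix\<in>I. P ix)" by (simp add: neg sum_negf)
    finally have "(\<Sum>ix\<in>I. P ix) = 0" by simp
    then show "Poly_Mapping.lookup (\<Sum>ix\<in>I. G ix) ws = Poly_Mapping.lookup 0 ws"
      unfolding lk by simp
  qed
  have FG: "F ix - G ix \<in> chern_kernel p q s n" if "ix \<in> I" for ix
    unfolding F_def G_def
  proof (rule tel[where j = m])
    show "\<forall>i<2 * n + 1. 1 \<le> i \<longrightarrow> (\<exists>d. map (\<lambda>k. (if k = 0 then etilde q s (ix!0) (ix!(1 mod m)) - (if ix!0 = ix!(1 mod m) then sc (1/2) else 0)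
                        else etilde q s (ix!k) (ix!((k+1) mod m)))) [0..<m] ! i =
            map (\<lambda>k. ep q s (ix!k) (ix!((k+1) mod m))) [0..<m] ! i + sc d)"
    proof (intro allI impI)
      fix i assume i: "i < 2*n+1" "1 \<le> i"
      then have im: "i < m" by (simp add: m_def)
      show "\<exists>d. map (\<lambda>k. (if k = 0 then etilde q s (ix!0) (ix!(1 mod m)) - (if ix!0 = ix!(1 mod m) then sc (1/2) else 0)
                        else etilde q s (ix!k) (ix!((k+1) mod m)))) [0..<m] ! i =
            map (\<lambda>k. ep q s (ix!k) (ix!((k+1) mod m))) [0..<m] ! i + sc d"
        using im i by (intro exI[of _ "if ix!i = ix!((i+1) mod m) then 1/2 else 0"]) (auto simp: ep_def)
    qed
  qed (auto simp: ep_def m_def simp del: upt_Suc)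
  have "(\<Sum>ix\<in>I. F ix) = (\<Sum>ix\<in>I. F ix - G ix) + (\<Sum>ix\<in>I. G ix)"
    by (simp add: sum_subtractf)
  also have "\<dots> \<in> chern_kernel p q s n" unfolding G0 chern_kernel_def
    using FG finI unfolding chern_kernel_def by (simp add: cspan_sum)
  finally show "chern c 4 (etilde q s) n \<in> chern_kernel p q s n"
    unfolding ch chern_kernel_def by (rule cspan.scal)
qed
end
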